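(* For $n\ge 0$ let $P^{(2)}_n(z_1,z_2)=\sum_{\pi} z_1^{a_1(\pi)}z_2^{a_2(\pi)}$, the sum over all multiset set-partitions $\pi$ of the multiset $\{1^2,2^2,\dots,n^2\}$ (each of $1,\dots,n$ appearing exactly twice); in particular $P^{(2)}_0=1$. Let $D_1=\partial/\partial z_1$, $D_2=\partial/\partial z_2$ and let $\mathcal{D}_2$ be the partial differential operator $$\mathcal{D}_2= z_2D_2+\tfrac12 z_1^4D_2^2+z_1^3D_1D_2+\tfrac12 z_1^2D_1^2+z_1^3D_2+z_1^2D_1+z_2 ,$$ where each term acts by first applying the indicated derivatives and then multiplying by the indicated monomial. Then for all $n\ge1$, $$P^{(2)}_n(z_1,z_2)=\mathcal{D}_2\,P^{(2)}_{n-1}(z_1,z_2).$$ Consequently the number of multiset set-partitions of $\{1^2,\dots,n^2\}$ equals $P^{(2)}_n(1,1)$.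
   Context: A multiset set-partition of a finite multiset $M$ is a finite multiset of nonempty sets (ordinary sets, no repeated elements inside a set) whose multiset union equals $M$; the same set may occur several times in the partition, and the partition is unordered. For a multiset set-partition $\pi$ and $i\ge1$, $a_i(\pi)$ denotes the number of distinct sets that occur in $\pi$ exactly $i$ times. *)

theory Defs
  imports "HOL-Analysis.Analysis" "HOL-Library.Multiset"
begin

definition mset_set_partitions :: "'a multiset \<Rightarrow> 'a set multiset set" where
  "mset_set_partitions M =
     {\<pi>. (\<forall>S \<in># \<pi>. S \<noteq> {} \<and> finite S) \<and> sum_mset (image_mset mset_set \<pi>) = M}"

definition mult_count :: "nat \<Rightarrow> 'a set multiset \<Rightarrow> nat" where
  "mult_count i \<pi> = card {S \<in> set_mset \<pi>. count \<pi> S = i}"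

definition double_mset :: "nat \<Rightarrow> nat multiset" where
  "double_mset n = (\<Sum>i\<in>{1..n}. {#i, i#})"

definition P2 :: "nat \<Rightarrow> real \<Rightarrow> real \<Rightarrow> real" where
  "P2 n z1 z2 = (\<Sum>\<pi>\<in>mset_set_partitions (double_mset n).
                   z1 ^ mult_count 1 \<pi> * z2 ^ mult_count 2 \<pi>)"

definition D2op :: "(real \<Rightarrow> real \<Rightarrow> real) \<Rightarrow> real \<Rightarrow> real \<Rightarrow> real" where
  "D2op f z1 z2 =
      z2 * deriv (\<lambda>t. f z1 t) z2
    + (1/2) * z1 ^ 4 * deriv (\<lambda>t. deriv (\<lambda>s. f z1 s) t) z2
    + z1 ^ 3 * deriv (\<lambda>u. deriv (\<lambda>t. f u t) z2) z1
    + (1/2) * z1 ^ 2 * deriv (\<lambda>u. deriv (\<lambda>v. f v z2) u) z1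
    + z1 ^ 3 * deriv (\<lambda>t. f z1 t) z2
    + z1 ^ 2 * deriv (\<lambda>u. f u z2) z1
    + z2 * f z1 z2"

end

theory Submission
  imports Defs
begin


lemma count_sum_blocks:
  assumes "\<forall>S\<in>#\<pi>. finite S"
  shows "count (sum_mset (image_mset mset_set \<pi>)) y = size (filter_mset (\<lambda>S. y \<in> S) \<pi>)"
  using assms by (induction \<pi>) (auto simp: count_mset_set')

lemma size_le_blocks:
  assumes "\<forall>S\<in>#\<pi>. S \<noteq> {} \<and> finite S"
  shows "size \<pi> \<le> size (sum_mset (image_mset mset_set \<pi>))"
  using assms
proof (induction \<pi>)
  case empty then show ?case by simp
next
  case (add S \<pi>)
  then have "card S \<ge> 1" by (simp add: Suc_leI card_gt_0_iff)
  moreover have "size \<pi> \<le> size (sum_mset (image_mset mset_set \<pi>))" using add by simp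
  ultimately show ?case by simp
qed

lemma finite_parts: "finite (mset_set_partitions (M::'a multiset))"
proof -
  have "mset_set_partitions M \<subseteq> (\<Union>k\<in>{..size M}. multisets_of_size (Pow (set_mset M)) k)"
  proof
    fix \<pi> assume p: "\<pi> \<in> mset_set_partitions M"
    then have b: "\<forall>S\<in>#\<pi>. S \<noteq> {} \<and> finite S" and s: "sum_mset (image_mset mset_set \<pi>) = M"
      by (auto simp: mset_set_partitions_def)
    have "size \<pi> \<le> size M" using size_le_blocks[OF b] s by simp
    moreover have "set_mset \<pi> \<subseteq> Pow (set_mset M)"
    proof
      fix S assume S: "S \<in># \<pi>"
      show "S \<in> Pow (set_mset M)"
      proof (rule PowI, rule subsetI)
        fix y assume y: "y \<in> S"
        have "count M y = size (filter_mset (\<lambda>S. y \<in> S) \<pi>)"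
          using count_sum_blocks[of \<pi> y] b s by auto
        moreover have "S \<in># filter_mset (\<lambda>S. y \<in> S) \<pi>" using S y by simp
        ultimately have "count M y > 0"
          by (metis gr0I size_eq_0_iff_empty empty_iff set_mset_empty)
        then show "y \<in> set_mset M" using count_greater_zero_iff by metis
      qed
    qed
    ultimately show "\<pi> \<in> (\<Union>k\<in>{..size M}. multisets_of_size (Pow (set_mset M)) k)"
      by (auto simp: multisets_of_size_def)
  qed
  moreover have "finite (\<Union>k\<in>{..size M}. multisets_of_size (Pow (set_mset M)) k)"
    by auto
  ultimately show ?thesis by (rule finite_subset)
qed

lemma blocks_sub:
  assumes "\<pi> \<in> mset_set_partitions M" "S \<in># \<pi>"
  shows "S \<subseteq> set_mset M"
proof
  fix y assume y: "y \<in> S"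
  have b: "\<forall>S\<in>#\<pi>. S \<noteq> {} \<and> finite S" and s: "sum_mset (image_mset mset_set \<pi>) = M"
    using assms by (auto simp: mset_set_partitions_def)
  have "count M y = size (filter_mset (\<lambda>S. y \<in> S) \<pi>)"
    using count_sum_blocks[of \<pi> y] b s by auto
  moreover have "S \<in># filter_mset (\<lambda>S. y \<in> S) \<pi>" using assms y by simp
  ultimately have "count M y > 0"
    by (metis gr0I size_eq_0_iff_empty empty_iff set_mset_empty)
  then show "y \<in> set_mset M" using count_greater_zero_iff by metis
qed

lemma filter_all: "(\<forall>S\<in>#Q. P S) \<Longrightarrow> filter_mset P Q = Q"
  by (induction Q) auto
lemma filter_none: "(\<forall>S\<in>#Q. \<not> P S) \<Longrightarrow> filter_mset P Q = {#}"
  by (induction Q) auto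
lemma all_repl: "(\<forall>S\<in>#Q. S = c) \<Longrightarrow> Q = replicate_mset (size Q) c"
  by (induction Q) auto

abbreviation sb :: "'a set multiset \<Rightarrow> 'a multiset" where
  "sb Q \<equiv> sum_mset (image_mset mset_set Q)"

lemma sb_insert:
  assumes "\<forall>S\<in>#X. finite S \<and> x \<notin> S"
  shows "sb (image_mset (insert x) X) = sb X + replicate_mset (size X) x"
  using assms by (induction X) auto

lemma sb_repl: "sb (replicate_mset k {x}) = replicate_mset k x"
  by (induction k) auto

lemma repl_add: "replicate_mset a x + replicate_mset b x = replicate_mset (a + b) x"
  by (induction a) auto

lemma image_mset_minus_x: "\<forall>S\<in>#Q. S \<noteq> {} \<and> x \<notin> S \<Longrightarrow> image_mset (\<lambda>S. S - {x}) Q = Q"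
  by (induction Q) auto

definition remx :: "'a \<Rightarrow> 'a set multiset \<Rightarrow> 'a set multiset" where
  "remx x \<pi> = filter_mset (\<lambda>S. S \<noteq> {}) (image_mset (\<lambda>S. S - {x}) \<pi>)"
definition opx :: "'a \<Rightarrow> 'a set multiset \<Rightarrow> 'a set multiset \<Rightarrow> 'a set multiset" where
  "opx x \<pi> X = (\<pi> - X) + image_mset (insert x) X + replicate_mset (2 - size X) {x}"
definition chX :: "'a \<Rightarrow> 'a set multiset \<Rightarrow> 'a set multiset" where
  "chX x \<pi> = image_mset (\<lambda>S. S - {x}) (filter_mset (\<lambda>S. x \<in> S \<and> S \<noteq> {x}) \<pi>)"
definition choices :: "'a set multiset \<Rightarrow> 'a set multiset set" where
  "choices \<pi> = {X. X \<subseteq># \<pi> \<and> size X \<le> 2}"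

lemma opx_part:
  assumes p: "\<pi> \<in> mset_set_partitions M" and x: "x \<notin># M" and X: "X \<subseteq># \<pi>" "size X \<le> 2"
  shows "opx x \<pi> X \<in> mset_set_partitions (M + {#x, x#})"
proof -
  have b: "\<forall>S\<in>#\<pi>. S \<noteq> {} \<and> finite S" and s: "sb \<pi> = M"
    using p by (auto simp: mset_set_partitions_def)
  have nx: "\<forall>S\<in>#\<pi>. x \<notin> S" using blocks_sub[OF p] x by blast
  have bX: "\<forall>S\<in>#X. finite S \<and> x \<notin> S" using b nx X(1) by (meson mset_subset_eqD)
  have e: "\<pi> = (\<pi> - X) + X" using X(1) by simp
  have "sb (opx x \<pi> X) = sb (\<pi> - X) + sb X + replicate_mset (size X) x + replicate_mset (2 - size X) x"
    unfolding opx_def using sb_insert[OF bX] sb_repl by simp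
  also have "\<dots> = sb \<pi> + (replicate_mset (size X) x + replicate_mset (2 - size X) x)"
    using e by (metis image_mset_union sum_mset.union add.assoc)
  also have "replicate_mset (size X) x + replicate_mset (2 - size X) x = replicate_mset 2 x"
    using X(2) by (metis le_add_diff_inverse repl_add)
  also have "replicate_mset 2 x = {#x, x#}" by (simp add: numeral_2_eq_2)
  finally have "sb (opx x \<pi> X) = M + {#x, x#}" using s by simp
  moreover have "\<forall>S\<in>#opx x \<pi> X. S \<noteq> {} \<and> finite S"
  proof
    fix S assume "S \<in># opx x \<pi> X"
    then have "S \<in># \<pi> - X \<or> S \<in># image_mset (insert x) X \<or> S \<in># replicate_mset (2 - size X) {x}"
      unfolding opx_def by (simp only: union_iff disj_assoc)
    then show "S \<noteq> {} \<and> finite S" using b bX by (auto dest: in_diffD split: if_splits)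
  qed
  ultimately show ?thesis by (simp add: mset_set_partitions_def)
qed

lemma remx_opx:
  assumes b: "\<forall>S\<in>#\<pi>. S \<noteq> {} \<and> x \<notin> S" and X: "X \<subseteq># \<pi>"
  shows "remx x (opx x \<pi> X) = \<pi>"
proof -
  have bX: "\<forall>S\<in>#X. S \<noteq> {} \<and> x \<notin> S" using b X by (meson mset_subset_eqD)
  have bd: "\<forall>S\<in>#\<pi> - X. S \<noteq> {} \<and> x \<notin> S" using b by (meson in_diffD)
  have 1: "image_mset (\<lambda>S. S - {x}) (\<pi> - X) = \<pi> - X"
    using bd by (metis image_mset_minus_x)
  have 2: "image_mset (\<lambda>S. S - {x}) (image_mset (insert x) X) = X"
    using bX by (induction X) auto
  have 3: "image_mset (\<lambda>S. S - {x}) (replicate_mset k {x}) = replicate_mset k {}" for k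
    by (induction k) auto
  have "remx x (opx x \<pi> X) = filter_mset (\<lambda>S. S \<noteq> {}) (\<pi> - X) + filter_mset (\<lambda>S. S \<noteq> {}) X
     + filter_mset (\<lambda>S. S \<noteq> {}) (replicate_mset (2 - size X) {})"
    unfolding remx_def opx_def by (simp only: image_mset_union filter_union_mset 1 2 3)
  also have "\<dots> = (\<pi> - X) + X"
  proof -
    have a1: "filter_mset (\<lambda>S. S \<noteq> {}) (\<pi> - X) = \<pi> - X" using bd by (intro filter_all) auto
    have a2: "filter_mset (\<lambda>S. S \<noteq> {}) X = X" using bX by (intro filter_all) auto
    have a3: "filter_mset (\<lambda>S. S \<noteq> {}) (replicate_mset k {}) = {#}" for k by (intro filter_none) auto
    show ?thesis by (simp only: a1 a2 a3 add_0_right)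
  qed
  also have "\<dots> = \<pi>" using X by simp
  finally show ?thesis .
qed

lemma chX_opx:
  assumes b: "\<forall>S\<in>#\<pi>. S \<noteq> {} \<and> x \<notin> S" and X: "X \<subseteq># \<pi>"
  shows "chX x (opx x \<pi> X) = X"
proof -
  have bX: "\<forall>S\<in>#X. S \<noteq> {} \<and> x \<notin> S" using b X by (meson mset_subset_eqD)
  have bd: "\<forall>S\<in>#\<pi> - X. S \<noteq> {} \<and> x \<notin> S" using b by (meson in_diffD)
  have 2: "image_mset (\<lambda>S. S - {x}) (image_mset (insert x) X) = X"
    using bX by (induction X) auto
  have 4: "filter_mset (\<lambda>S. x \<in> S \<and> S \<noteq> {x}) (image_mset (insert x) X) = image_mset (insert x) X"
    using bX by (induction X) auto
  have 5: "filter_mset (\<lambda>S. x \<in> S \<and> S \<noteq> {x}) (replicate_mset k {x}) = {#}" for k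
    by (induction k) auto
  have 6: "filter_mset (\<lambda>S. x \<in> S \<and> S \<noteq> {x}) (\<pi> - X) = {#}" using bd by (intro filter_none) auto
  show ?thesis unfolding chX_def opx_def
    by (simp only: filter_union_mset 2 4 5 6 add_0 add_0_right)
qed

lemma rem_part:
  assumes p: "\<pi> \<in> mset_set_partitions (M + {#x, x#})" and x: "x \<notin># M"
  shows "remx x \<pi> \<in> mset_set_partitions M \<and> chX x \<pi> \<in> choices (remx x \<pi>)
         \<and> opx x (remx x \<pi>) (chX x \<pi>) = \<pi>"
proof -
  have b: "\<forall>S\<in>#\<pi>. S \<noteq> {} \<and> finite S" and s: "sb \<pi> = M + {#x, x#}"
    using p by (auto simp: mset_set_partitions_def)
  define Q0 where "Q0 = filter_mset (\<lambda>S. x \<notin> S) \<pi>"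
  define Q1 where "Q1 = filter_mset (\<lambda>S. x \<in> S \<and> S \<noteq> {x}) \<pi>"
  define Q2 where "Q2 = filter_mset (\<lambda>S. S = {x}) \<pi>"
  define C where "C = chX x \<pi>"
  have C: "C = image_mset (\<lambda>S. S - {x}) Q1" unfolding C_def chX_def Q1_def ..
  have dec: "\<pi> = Q0 + Q1 + Q2"
    unfolding Q0_def Q1_def Q2_def by (rule multiset_eqI) auto
  have bQ0: "\<forall>S\<in>#Q0. S \<noteq> {} \<and> finite S \<and> x \<notin> S" using b unfolding Q0_def by auto
  have bQ1: "\<forall>S\<in>#Q1. S \<noteq> {} \<and> finite S \<and> x \<in> S \<and> S \<noteq> {x}" using b unfolding Q1_def by auto
  have bC: "\<forall>S\<in>#C. S \<noteq> {} \<and> finite S \<and> x \<notin> S" using bQ1 unfolding C by auto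
  have Q2r: "Q2 = replicate_mset (size Q2) {x}" by (rule all_repl) (auto simp: Q2_def)
  have Q1C: "image_mset (insert x) C = Q1" unfolding C
    using bQ1 by (induction Q1) (auto simp: insert_absorb)
  have sizeC: "size C = size Q1" unfolding C by simp
  have cnt: "count (M + {#x, x#}) x = size (filter_mset (\<lambda>S. x \<in> S) \<pi>)"
    using count_sum_blocks[of \<pi> x] b s by auto
  have "filter_mset (\<lambda>S. x \<in> S) \<pi> = Q1 + Q2"
    unfolding Q1_def Q2_def by (rule multiset_eqI) auto
  with cnt x have sz: "size Q1 + size Q2 = 2" by (simp add: not_in_iff)
  have rem: "remx x \<pi> = Q0 + C"
  proof -
    have "remx x \<pi> = filter_mset (\<lambda>S. S \<noteq> {}) (image_mset (\<lambda>S. S - {x}) Q0)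
       + filter_mset (\<lambda>S. S \<noteq> {}) C + filter_mset (\<lambda>S. S \<noteq> {}) (image_mset (\<lambda>S. S - {x}) Q2)"
      unfolding remx_def C by (subst dec) (simp only: image_mset_union filter_union_mset)
    also have "image_mset (\<lambda>S. S - {x}) Q0 = Q0"
      using bQ0 by (intro image_mset_minus_x) auto
    also have "filter_mset (\<lambda>S. S \<noteq> {}) Q0 = Q0" using bQ0 by (intro filter_all) auto
    also have "filter_mset (\<lambda>S. S \<noteq> {}) C = C" using bC by (intro filter_all) auto
    also have "filter_mset (\<lambda>S. S \<noteq> {}) (image_mset (\<lambda>S. S - {x}) Q2) = {#}"
      by (intro filter_none) (auto simp: Q2_def)
    finally show ?thesis by simp
  qed
  have "sb \<pi> = sb Q0 + sb Q1 + sb Q2" by (subst dec) simp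
  also have "sb Q1 = sb C + replicate_mset (size Q1) x"
    using sb_insert[of C x] bC Q1C sizeC by auto
  also have "sb Q2 = replicate_mset (size Q2) x" by (subst Q2r) (simp only: sb_repl)
  finally have "sb \<pi> = sb (Q0 + C) + (replicate_mset (size Q1) x + replicate_mset (size Q2) x)"
    by (simp add: add_ac)
  also have "replicate_mset (size Q1) x + replicate_mset (size Q2) x = {#x, x#}"
    using sz by (simp add: repl_add numeral_2_eq_2)
  finally have "sb (Q0 + C) = M" using s by simp
  then have part: "remx x \<pi> \<in> mset_set_partitions M"
    unfolding rem mset_set_partitions_def using bQ0 bC by auto
  have ch: "C \<in> choices (remx x \<pi>)" unfolding choices_def rem using sz sizeC by auto
  have "opx x (remx x \<pi>) C = Q0 + Q1 + replicate_mset (2 - size Q1) {x}"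
    unfolding opx_def rem Q1C[symmetric] sizeC by simp
  also have "\<dots> = \<pi>" using sz dec Q2r by (metis add_diff_cancel_left')
  finally show ?thesis using part ch unfolding C_def by simp
qed

lemma part_blocks: "\<pi> \<in> mset_set_partitions M \<Longrightarrow> x \<notin># M \<Longrightarrow> \<forall>S\<in>#\<pi>. S \<noteq> {} \<and> x \<notin> S"
  using blocks_sub[of \<pi> M] unfolding mset_set_partitions_def by auto

lemma sum_step:
  fixes g :: "'a set multiset \<Rightarrow> real"
  assumes x: "x \<notin># M"
  shows "(\<Sum>\<pi>\<in>mset_set_partitions (M + {#x, x#}). g \<pi>)
       = (\<Sum>\<rho>\<in>mset_set_partitions M. \<Sum>X\<in>choices \<rho>. g (opx x \<rho> X))"
proof -
  have fib: "{\<pi>. \<pi> \<in> mset_set_partitions (M + {#x, x#}) \<and> remx x \<pi> = \<rho>} = opx x \<rho> ` choices \<rho>"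
    if r: "\<rho> \<in> mset_set_partitions M" for \<rho>
  proof
    show "{\<pi>. \<pi> \<in> mset_set_partitions (M + {#x, x#}) \<and> remx x \<pi> = \<rho>} \<subseteq> opx x \<rho> ` choices \<rho>"
      using rem_part[OF _ x] by (auto intro!: image_eqI)
    show "opx x \<rho> ` choices \<rho> \<subseteq> {\<pi>. \<pi> \<in> mset_set_partitions (M + {#x, x#}) \<and> remx x \<pi> = \<rho>}"
      using opx_part[OF r x] remx_opx[OF part_blocks[OF r x]] by (auto simp: choices_def)
  qed
  have inj: "inj_on (opx x \<rho>) (choices \<rho>)" if r: "\<rho> \<in> mset_set_partitions M" for \<rho>
    by (rule inj_on_inverseI[where g = "chX x"])
       (use chX_opx[OF part_blocks[OF r x]] in \<open>auto simp: choices_def\<close>)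
  have "(\<Sum>\<pi>\<in>mset_set_partitions (M + {#x, x#}). g \<pi>)
      = (\<Sum>\<rho>\<in>mset_set_partitions M. \<Sum>\<pi>\<in>{\<pi>. \<pi> \<in> mset_set_partitions (M + {#x, x#}) \<and> remx x \<pi> = \<rho>}. g \<pi>)"
    by (rule sum.group[symmetric]) (use finite_parts rem_part[OF _ x] in auto)
  also have "\<dots> = (\<Sum>\<rho>\<in>mset_set_partitions M. \<Sum>X\<in>choices \<rho>. g (opx x \<rho> X))"
  proof (rule sum.cong[OF refl])
    fix \<rho> assume r: "\<rho> \<in> mset_set_partitions M"
    show "(\<Sum>\<pi>\<in>{\<pi>. \<pi> \<in> mset_set_partitions (M + {#x, x#}) \<and> remx x \<pi> = \<rho>}. g \<pi>) = (\<Sum>X\<in>choices \<rho>. g (opx x \<rho> X))"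
      by (simp only: fib[OF r] sum.reindex[OF inj[OF r]] comp_def)
  qed
  finally show ?thesis .
qed



lemma mc_add:
  assumes "set_mset A \<inter> set_mset K = {}"
  shows "mult_count i (A + K) = mult_count i A + mult_count i K"
proof -
  have "{S \<in> set_mset (A + K). count (A + K) S = i} =
        {S \<in> set_mset A. count A S = i} \<union> {S \<in> set_mset K. count K S = i}"
  proof (intro equalityI subsetI)
    fix S assume "S \<in> {S \<in> set_mset (A + K). count (A + K) S = i}"
    then show "S \<in> {S \<in> set_mset A. count A S = i} \<union> {S \<in> set_mset K. count K S = i}"
      using assms by (cases "S \<in># A") (auto simp: not_in_iff[symmetric] disjoint_iff)
  next
    fix S assume "S \<in> {S \<in> set_mset A. count A S = i} \<union> {S \<in> set_mset K. count K S = i}"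
    then show "S \<in> {S \<in> set_mset (A + K). count (A + K) S = i}"
      using assms by (auto simp: not_in_iff[symmetric] disjoint_iff)
  qed
  moreover have "card ({S \<in> set_mset A. count A S = i} \<union> {S \<in> set_mset K. count K S = i})
     = card {S \<in> set_mset A. count A S = i} + card {S \<in> set_mset K. count K S = i}"
    by (rule card_Un_disjoint) (use assms in auto)
  ultimately show ?thesis unfolding mult_count_def by simp
qed
lemma mc_op:
  assumes K: "\<forall>S\<in>#K. count K S = count \<rho> S" and X: "X \<subseteq># K" and b: "\<forall>S\<in>#\<rho>. S \<noteq> {} \<and> x \<notin> S"
  shows "mult_count i (opx x \<rho> X) + mult_count i K = mult_count i \<rho> + mult_count i (opx x K X)"
proof -
  have Ks: "K \<subseteq># \<rho>"
  proof (rule mset_subset_eqI)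
    fix a show "count K a \<le> count \<rho> a" using K by (cases "a \<in># K") (auto simp: not_in_iff)
  qed
  define A where "A = \<rho> - K"
  have r: "\<rho> = A + K" using Ks unfolding A_def by simp
  have dA: "set_mset A \<inter> set_mset K = {}"
  proof -
    { fix S assume S: "S \<in># K" "S \<in># A"
      then have "count A S > 0" by simp
      moreover have "count A S = 0" unfolding A_def using K S(1) by simp
      ultimately have False by simp }
    then show ?thesis by blast
  qed
  have bK: "\<forall>S\<in>#K. S \<noteq> {} \<and> x \<notin> S" using b r by simp
  have bA: "\<forall>S\<in>#A. x \<notin> S" using b r by simp
  have o: "opx x \<rho> X = A + opx x K X"
  proof -
    have o1: "A + K - X = A + (K - X)" using X by (rule multiset_diff_union_assoc)
    show ?thesis unfolding opx_def r o1 by (simp only: add.assoc)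
  qed
  have dO: "set_mset A \<inter> set_mset (opx x K X) = {}"
  proof -
    { fix S assume S: "S \<in># opx x K X" "S \<in># A"
      then have "S \<in># K - X \<or> S \<in># image_mset (insert x) X \<or> S \<in># replicate_mset (2 - size X) {x}"
        unfolding opx_def by (simp only: union_iff disj_assoc)
      moreover have "S \<notin># K" using dA S(2) by blast
      moreover have "x \<notin> S" using bA S(2) by blast
      ultimately have False by (auto dest: in_diffD split: if_splits)
    }
    then show ?thesis by blast
  qed
  show ?thesis unfolding o using mc_add[OF dA, of i] mc_add[OF dO, of i] r by simp
qed



lemma mc_sum: "mult_count i K = (\<Sum>S\<in>set_mset K. if count K S = i then 1 else 0)"
  unfolding mult_count_def by (simp add: sum.If_cases Int_def)

lemma pair_sub: "B \<noteq> C \<Longrightarrow> B \<in># \<rho> \<Longrightarrow> C \<in># \<rho> \<Longrightarrow> {#B, C#} \<subseteq># \<rho>"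
  by (simp add: insert_subset_eq_iff in_diff_count)

lemma dbl_sub: "count \<rho> B = 2 \<Longrightarrow> {#B, B#} \<subseteq># \<rho>"
  by (rule mset_subset_eqI) auto

lemma cnt_le2:
  assumes r: "\<rho> \<in> mset_set_partitions M" and c2: "\<forall>y. count M y \<le> 2" and S: "S \<in># \<rho>"
  shows "count \<rho> S \<le> 2"
proof -
  have b: "\<forall>S\<in>#\<rho>. S \<noteq> {} \<and> finite S" and s: "sb \<rho> = M"
    using r by (auto simp: mset_set_partitions_def)
  obtain y where y: "y \<in> S" using b S by blast
  have "count \<rho> S = count (filter_mset (\<lambda>T. y \<in> T) \<rho>) S" using y by simp
  also have "\<dots> \<le> size (filter_mset (\<lambda>T. y \<in> T) \<rho>)" by (rule count_le_size)
  also have "\<dots> = count M y" using count_sum_blocks[of \<rho> y] b s by auto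
  finally show ?thesis using c2 by (metis order.trans)
qed




lemma deriv_sum_pow:
  "deriv (\<lambda>t. \<Sum>i\<in>I. c i * t ^ e i) (x::real) = (\<Sum>i\<in>I. c i * (of_nat (e i) * x ^ (e i - 1)))"
  by (rule DERIV_imp_deriv) (auto intro!: derivative_eq_intros simp: mult_ac)

lemma deriv_sum_pow':
  "deriv (\<lambda>t. \<Sum>i\<in>I. t ^ e i * c i) (x::real) = (\<Sum>i\<in>I. c i * (of_nat (e i) * x ^ (e i - 1)))"
  by (rule DERIV_imp_deriv) (auto intro!: derivative_eq_intros simp: mult.commute)

lemma choose2_real: "real (n choose 2) = real n * (real n - 1) / 2"
proof (cases n)
  case 0 then show ?thesis by simp
next
  case (Suc m)
  have ev: "even (n * (n - 1))" using Suc by auto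
  have "real (n choose 2) = real (n * (n - 1)) / 2"
    unfolding choose_two using ev by (simp add: real_of_nat_div)
  then show ?thesis using Suc by (simp add: of_nat_diff algebra_simps)
qed


lemma alg:
  fixes z1 z2 :: real and a b :: nat
  shows "z1 ^ a * z2 ^ (b + 1) + real a * (z1 ^ (a + 1) * z2 ^ b) + real b * (z1 ^ (a + 3) * z2 ^ (b - 1))
    + real b * (z1 ^ a * z2 ^ b) + real (a choose 2) * (z1 ^ a * z2 ^ b)
    + real (b choose 2) * (z1 ^ (a + 4) * z2 ^ (b - 2)) + real a * real b * (z1 ^ (a + 2) * z2 ^ (b - 1))
  = z2 * (z1 ^ a * (real b * z2 ^ (b - 1)))
    + 1 / 2 * z1 ^ 4 * ((z1 ^ a * real b) * (real (b - 1) * z2 ^ (b - 1 - 1)))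
    + z1 ^ 3 * ((real b * z2 ^ (b - 1)) * (real a * z1 ^ (a - 1)))
    + 1 / 2 * z1 ^ 2 * ((z2 ^ b * real a) * (real (a - 1) * z1 ^ (a - 1 - 1)))
    + z1 ^ 3 * (z1 ^ a * (real b * z2 ^ (b - 1)))
    + z1 ^ 2 * (z2 ^ b * (real a * z1 ^ (a - 1)))
    + z2 * (z1 ^ a * z2 ^ b)"
proof -
  have A: "a = 0 \<or> a = 1 \<or> (\<exists>k. a = k + 2)" by presburger
  have B: "b = 0 \<or> b = 1 \<or> (\<exists>k. b = k + 2)" by presburger
  show ?thesis using A B
    apply (elim disjE exE)
    apply (simp_all add: choose2_real power_add)
    apply (simp_all add: field_simps)
    apply (((thin_tac "_ = _")+)?, algebra)+
    done
qed



lemma conc0: "mult_count 1 (opx x {#} {#}) = 0" "mult_count 2 (opx x {#} {#}) = 1"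
  by (simp_all add: mc_sum opx_def)

lemma conc1:
  assumes "B \<noteq> {}" "x \<notin> B"
  shows
  "mult_count 1 {#B#} = 1" "mult_count 2 {#B#} = 0"
  "mult_count 1 (opx x {#B#} {#B#}) = 2" "mult_count 2 (opx x {#B#} {#B#}) = 0"
  "mult_count 1 {#B,B#} = 0" "mult_count 2 {#B,B#} = 1"
  "mult_count 1 (opx x {#B,B#} {#B#}) = 3" "mult_count 2 (opx x {#B,B#} {#B#}) = 0"
  "mult_count 1 (opx x {#B,B#} {#B,B#}) = 0" "mult_count 2 (opx x {#B,B#} {#B,B#}) = 1"
proof -
  have d: "B \<noteq> insert x B" "B \<noteq> {x}" "insert x B \<noteq> {x}"
    using assms by auto
  have d2: "\<not> B \<subseteq> {x}" using assms by auto
  note dd = d2 d d[symmetric]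
  show
  "mult_count 1 {#B#} = 1" "mult_count 2 {#B#} = 0"
  "mult_count 1 (opx x {#B#} {#B#}) = 2" "mult_count 2 (opx x {#B#} {#B#}) = 0"
  "mult_count 1 {#B,B#} = 0" "mult_count 2 {#B,B#} = 1"
  "mult_count 1 (opx x {#B,B#} {#B#}) = 3" "mult_count 2 (opx x {#B,B#} {#B#}) = 0"
  "mult_count 1 (opx x {#B,B#} {#B,B#}) = 0" "mult_count 2 (opx x {#B,B#} {#B,B#}) = 1"
    by (simp_all add: mc_sum opx_def dd)
qed

lemma conc2:
  assumes "B \<noteq> {}" "x \<notin> B" "C \<noteq> {}" "x \<notin> C" "B \<noteq> C"
  shows
  "mult_count 1 {#B,C#} = 2" "mult_count 2 {#B,C#} = 0"
  "mult_count 1 (opx x {#B,C#} {#B,C#}) = 2" "mult_count 2 (opx x {#B,C#} {#B,C#}) = 0"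
  "mult_count 1 {#B,B,C,C#} = 0" "mult_count 2 {#B,B,C,C#} = 2"
  "mult_count 1 (opx x {#B,B,C,C#} {#B,C#}) = 4" "mult_count 2 (opx x {#B,B,C,C#} {#B,C#}) = 0"
  "mult_count 1 {#B,C,C#} = 1" "mult_count 2 {#B,C,C#} = 1"
  "mult_count 1 (opx x {#B,C,C#} {#B,C#}) = 3" "mult_count 2 (opx x {#B,C,C#} {#B,C#}) = 0"
proof -
  have d: "insert x B \<noteq> insert x C" "B \<noteq> insert x B" "C \<noteq> insert x C"
    "B \<noteq> insert x C" "C \<noteq> insert x B" "B \<noteq> {x}" "C \<noteq> {x}"
    "insert x B \<noteq> {x}" "insert x C \<noteq> {x}"
    using assms by (auto simp: insert_ident)
  have d2: "\<not> B \<subseteq> {x}" "\<not> C \<subseteq> {x}" using assms by auto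
  note dd = d2 d d[symmetric] assms(5) assms(5)[symmetric]
  show
  "mult_count 1 {#B,C#} = 2" "mult_count 2 {#B,C#} = 0"
  "mult_count 1 (opx x {#B,C#} {#B,C#}) = 2" "mult_count 2 (opx x {#B,C#} {#B,C#}) = 0"
  "mult_count 1 {#B,B,C,C#} = 0" "mult_count 2 {#B,B,C,C#} = 2"
  "mult_count 1 (opx x {#B,B,C,C#} {#B,C#}) = 4" "mult_count 2 (opx x {#B,B,C,C#} {#B,C#}) = 0"
  "mult_count 1 {#B,C,C#} = 1" "mult_count 2 {#B,C,C#} = 1"
  "mult_count 1 (opx x {#B,C,C#} {#B,C#}) = 3" "mult_count 2 (opx x {#B,C,C#} {#B,C#}) = 0"
    by (simp_all add: mc_sum opx_def dd)
qed



lemma mc_empty: "mult_count i {#} = 0" by (simp add: mult_count_def)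

lemma weight_sum:
  fixes z1 z2 :: real
  assumes r: "\<rho> \<in> mset_set_partitions M" and x: "x \<notin># M" and c2: "\<forall>y. count M y \<le> 2"
    and a_def: "a = mult_count 1 \<rho>" and b_def: "b = mult_count 2 \<rho>"
  shows "(\<Sum>X\<in>choices \<rho>. z1 ^ mult_count 1 (opx x \<rho> X) * z2 ^ mult_count 2 (opx x \<rho> X)) =
    z1 ^ a * z2 ^ (b + 1) + real a * (z1 ^ (a + 1) * z2 ^ b) + real b * (z1 ^ (a + 3) * z2 ^ (b - 1))
    + real b * (z1 ^ a * z2 ^ b) + real (a choose 2) * (z1 ^ a * z2 ^ b)
    + real (b choose 2) * (z1 ^ (a + 4) * z2 ^ (b - 2)) + real a * real b * (z1 ^ (a + 2) * z2 ^ (b - 1))"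
proof -
  have bl: "\<forall>S\<in>#\<rho>. S \<noteq> {} \<and> x \<notin> S" by (rule part_blocks[OF r x])
  have cle: "\<And>S. S \<in># \<rho> \<Longrightarrow> count \<rho> S \<le> 2" using cnt_le2[OF r c2] by blast
  define S1 where "S1 = {S \<in> set_mset \<rho>. count \<rho> S = 1}"
  define S2 where "S2 = {S \<in> set_mset \<rho>. count \<rho> S = 2}"
  have fin1: "finite S1" and fin2: "finite S2" unfolding S1_def S2_def by auto
  have S12: "S1 \<inter> S2 = {}" unfolding S1_def S2_def by auto
  have setr: "set_mset \<rho> = S1 \<union> S2"
  proof
    show "set_mset \<rho> \<subseteq> S1 \<union> S2"
    proof
      fix S assume S: "S \<in># \<rho>"
      then have "count \<rho> S \<ge> 1" "count \<rho> S \<le> 2" using cle by (auto simp: Suc_le_eq)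
      then have "count \<rho> S = 1 \<or> count \<rho> S = 2" by linarith
      then show "S \<in> S1 \<union> S2" using S unfolding S1_def S2_def by auto
    qed
  qed (auto simp: S1_def S2_def)
  have ca: "card S1 = a" unfolding a_def mult_count_def S1_def ..
  have cb: "card S2 = b" unfolding b_def mult_count_def S2_def ..
  have in1: "S \<in># \<rho> \<and> count \<rho> S = 1 \<and> S \<noteq> {} \<and> x \<notin> S" if "S \<in> S1" for S
    using that bl unfolding S1_def by auto
  have in2: "S \<in># \<rho> \<and> count \<rho> S = 2 \<and> S \<noteq> {} \<and> x \<notin> S" if "S \<in> S2" for S
    using that bl unfolding S2_def by auto
  define W where "W X = z1 ^ mult_count 1 (opx x \<rho> X) * z2 ^ mult_count 2 (opx x \<rho> X)" for X
  have key: "mult_count 1 (opx x \<rho> X) + k1 = a + o1 \<and> mult_count 2 (opx x \<rho> X) + k2 = b + o2"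
    if "\<forall>S\<in>#K. count K S = count \<rho> S" "X \<subseteq># K" "mult_count 1 K = k1" "mult_count 2 K = k2"
       "mult_count 1 (opx x K X) = o1" "mult_count 2 (opx x K X) = o2" for K X k1 k2 o1 o2
    using mc_op[OF that(1,2) bl, of 1] mc_op[OF that(1,2) bl, of 2] that(3-6) a_def b_def by simp
  have w0: "W {#} = z1 ^ a * z2 ^ (b + 1)"
  proof -
    have "mult_count 1 (opx x \<rho> {#}) + 0 = a + 0 \<and> mult_count 2 (opx x \<rho> {#}) + 0 = b + 1"
      by (rule key[OF _ _ mc_empty mc_empty conc0]) auto
    then have e: "mult_count 1 (opx x \<rho> {#}) = a" "mult_count 2 (opx x \<rho> {#}) = b + 1" by auto
    show ?thesis unfolding W_def e ..
  qed
  have w1: "W {#B#} = z1 ^ (a + 1) * z2 ^ b" if B: "B \<in> S1" for B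
  proof -
    note i = in1[OF B]
    have "mult_count 1 (opx x \<rho> {#B#}) + 1 = a + 2 \<and> mult_count 2 (opx x \<rho> {#B#}) + 0 = b + 0"
      by (rule key[OF _ _ conc1(1,2)[of B x] conc1(3,4)[of B x]]) (use i in auto)
    then have e: "mult_count 1 (opx x \<rho> {#B#}) = a + 1" "mult_count 2 (opx x \<rho> {#B#}) = b" by auto
    show ?thesis unfolding W_def e ..
  qed
  have w2: "W {#B#} = z1 ^ (a + 3) * z2 ^ (b - 1)" if B: "B \<in> S2" for B
  proof -
    note i = in2[OF B]
    have "mult_count 1 (opx x \<rho> {#B#}) + 0 = a + 3 \<and> mult_count 2 (opx x \<rho> {#B#}) + 1 = b + 0"
      by (rule key[OF _ _ conc1(5,6)[of B x] conc1(7,8)[of B x]]) (use i in auto)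
    then have e: "mult_count 1 (opx x \<rho> {#B#}) = a + 3" "mult_count 2 (opx x \<rho> {#B#}) = b - 1" by auto
    show ?thesis unfolding W_def e ..
  qed
  have w3: "W {#B, B#} = z1 ^ a * z2 ^ b" if B: "B \<in> S2" for B
  proof -
    note i = in2[OF B]
    have "mult_count 1 (opx x \<rho> {#B, B#}) + 0 = a + 0 \<and> mult_count 2 (opx x \<rho> {#B, B#}) + 1 = b + 1"
      by (rule key[OF _ _ conc1(5,6)[of B x] conc1(9,10)[of B x]]) (use i in auto)
    then have e: "mult_count 1 (opx x \<rho> {#B, B#}) = a" "mult_count 2 (opx x \<rho> {#B, B#}) = b" by auto
    show ?thesis unfolding W_def e ..
  qed
  have w4: "W {#B, C#} = z1 ^ a * z2 ^ b" if B: "B \<in> S1" and C: "C \<in> S1" and BC: "B \<noteq> C" for B C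
  proof -
    note i = in1[OF B] in1[OF C]
    have "mult_count 1 (opx x \<rho> {#B, C#}) + 2 = a + 2 \<and> mult_count 2 (opx x \<rho> {#B, C#}) + 0 = b + 0"
      by (rule key[OF _ _ conc2(1,2)[of B x C] conc2(3,4)[of B x C]]) (use i BC in auto)
    then have e: "mult_count 1 (opx x \<rho> {#B, C#}) = a" "mult_count 2 (opx x \<rho> {#B, C#}) = b" by auto
    show ?thesis unfolding W_def e ..
  qed
  have w5: "W {#B, C#} = z1 ^ (a + 4) * z2 ^ (b - 2)" if B: "B \<in> S2" and C: "C \<in> S2" and BC: "B \<noteq> C" for B C
  proof -
    note i = in2[OF B] in2[OF C]
    have "mult_count 1 (opx x \<rho> {#B, C#}) + 0 = a + 4 \<and> mult_count 2 (opx x \<rho> {#B, C#}) + 2 = b + 0"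
      by (rule key[OF _ _ conc2(5,6)[of B x C] conc2(7,8)[of B x C]])
         (use i BC in \<open>auto simp: insert_subset_eq_iff\<close>)
    then have e: "mult_count 1 (opx x \<rho> {#B, C#}) = a + 4" "mult_count 2 (opx x \<rho> {#B, C#}) = b - 2" by auto
    show ?thesis unfolding W_def e ..
  qed
  have w6: "W {#B, C#} = z1 ^ (a + 2) * z2 ^ (b - 1)" if B: "B \<in> S1" and C: "C \<in> S2" for B C
  proof -
    note i = in1[OF B] in2[OF C]
    have BC: "B \<noteq> C" using B C S12 by blast
    have "mult_count 1 (opx x \<rho> {#B, C#}) + 1 = a + 3 \<and> mult_count 2 (opx x \<rho> {#B, C#}) + 1 = b + 0"
      by (rule key[OF _ _ conc2(9,10)[of B x C] conc2(11,12)[of B x C]])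
         (use i BC in \<open>auto simp: insert_subset_eq_iff\<close>)
    then have e: "mult_count 1 (opx x \<rho> {#B, C#}) = a + 2" "mult_count 2 (opx x \<rho> {#B, C#}) = b - 1" by auto
    show ?thesis unfolding W_def e ..
  qed
  define P1 where "P1 = {U. U \<subseteq> S1 \<and> card U = 2}"
  define P2 where "P2 = {U. U \<subseteq> S2 \<and> card U = 2}"
  define T0 where "T0 = {{#} :: 'a set multiset}"
  define T1 where "T1 = (\<lambda>B. {#B#}) ` S1"
  define T2 where "T2 = (\<lambda>B. {#B#}) ` S2"
  define T3 where "T3 = (\<lambda>B. {#B, B#}) ` S2"
  define T4 where "T4 = mset_set ` P1"
  define T5 where "T5 = mset_set ` P2"
  define T6 where "T6 = (\<lambda>(B, C). {#B, C#}) ` (S1 \<times> S2)"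
  have P1e: "\<exists>B C. U = {B, C} \<and> B \<noteq> C \<and> B \<in> S1 \<and> C \<in> S1" if "U \<in> P1" for U
    using that unfolding P1_def by (auto simp: card_2_iff)
  have P2e: "\<exists>B C. U = {B, C} \<and> B \<noteq> C \<and> B \<in> S2 \<and> C \<in> S2" if "U \<in> P2" for U
    using that unfolding P2_def by (auto simp: card_2_iff)
  have sum0: "sum W T0 = z1 ^ a * z2 ^ (b + 1)" unfolding T0_def using w0 by simp
  have sum1: "sum W T1 = real a * (z1 ^ (a + 1) * z2 ^ b)"
  proof -
    have "sum W T1 = (\<Sum>B\<in>S1. W {#B#})" unfolding T1_def
      by (rule sum.reindex_cong[where l = "\<lambda>B. {#B#}"]) (auto simp: inj_on_def)
    also have "\<dots> = (\<Sum>B\<in>S1. z1 ^ (a + 1) * z2 ^ b)" by (rule sum.cong) (auto simp: w1)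
    finally show ?thesis using ca by simp
  qed
  have sum2: "sum W T2 = real b * (z1 ^ (a + 3) * z2 ^ (b - 1))"
  proof -
    have "sum W T2 = (\<Sum>B\<in>S2. W {#B#})" unfolding T2_def
      by (rule sum.reindex_cong[where l = "\<lambda>B. {#B#}"]) (auto simp: inj_on_def)
    also have "\<dots> = (\<Sum>B\<in>S2. z1 ^ (a + 3) * z2 ^ (b - 1))" by (rule sum.cong) (auto simp: w2)
    finally show ?thesis using cb by simp
  qed
  have sum3: "sum W T3 = real b * (z1 ^ a * z2 ^ b)"
  proof -
    have "sum W T3 = (\<Sum>B\<in>S2. W {#B, B#})" unfolding T3_def
      by (rule sum.reindex_cong[where l = "\<lambda>B. {#B, B#}"]) (auto simp: inj_on_def dest!: arg_cong[where f = set_mset])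
    also have "\<dots> = (\<Sum>B\<in>S2. z1 ^ a * z2 ^ b)" by (rule sum.cong) (auto simp: w3)
    finally show ?thesis using cb by simp
  qed
  have injm: "inj_on mset_set P" if "\<forall>U\<in>P. finite U" for P :: "'a set set set"
    using that by (metis finite_set_mset_mset_set inj_onI)
  have sum4: "sum W T4 = real (a choose 2) * (z1 ^ a * z2 ^ b)"
  proof -
    have "sum W T4 = (\<Sum>U\<in>P1. W (mset_set U))" unfolding T4_def
    proof (rule sum.reindex_cong[where l = mset_set])
      show "inj_on mset_set P1" by (rule injm) (use fin1 in \<open>auto simp: P1_def intro: finite_subset\<close>)
    qed auto
    also have "\<dots> = (\<Sum>U\<in>P1. z1 ^ a * z2 ^ b)"
    proof (rule sum.cong[OF refl])
      fix U assume "U \<in> P1"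
      then obtain B C where "U = {B, C}" "B \<noteq> C" "B \<in> S1" "C \<in> S1" using P1e by blast
      then show "W (mset_set U) = z1 ^ a * z2 ^ b" using w4 by simp
    qed
    moreover have "card P1 = a choose 2" unfolding P1_def using n_subsets[OF fin1] ca by simp
    ultimately show ?thesis by simp
  qed
  have sum5: "sum W T5 = real (b choose 2) * (z1 ^ (a + 4) * z2 ^ (b - 2))"
  proof -
    have "sum W T5 = (\<Sum>U\<in>P2. W (mset_set U))" unfolding T5_def
    proof (rule sum.reindex_cong[where l = mset_set])
      show "inj_on mset_set P2" by (rule injm) (use fin2 in \<open>auto simp: P2_def intro: finite_subset\<close>)
    qed auto
    also have "\<dots> = (\<Sum>U\<in>P2. z1 ^ (a + 4) * z2 ^ (b - 2))"
    proof (rule sum.cong[OF refl])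
      fix U assume "U \<in> P2"
      then obtain B C where "U = {B, C}" "B \<noteq> C" "B \<in> S2" "C \<in> S2" using P2e by blast
      then show "W (mset_set U) = z1 ^ (a + 4) * z2 ^ (b - 2)" using w5 by simp
    qed
    moreover have "card P2 = b choose 2" unfolding P2_def using n_subsets[OF fin2] cb by simp
    ultimately show ?thesis by simp
  qed
  have sum6: "sum W T6 = real a * real b * (z1 ^ (a + 2) * z2 ^ (b - 1))"
  proof -
    have inj6: "inj_on (\<lambda>(B, C). {#B, C#}) (S1 \<times> S2)"
    proof (rule inj_onI, clarify)
      fix B C B' C' assume h: "B \<in> S1" "C \<in> S2" "B' \<in> S1" "C' \<in> S2" "{#B, C#} = {#B', C'#}"
      then have "B \<noteq> C'" "C \<noteq> B'" using S12 by auto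
      moreover have "{B, C} = {B', C'}" using arg_cong[OF h(5), of set_mset] by simp
      ultimately show "B = B' \<and> C = C'" by (metis doubleton_eq_iff)
    qed
    have "sum W T6 = (\<Sum>(B, C)\<in>S1 \<times> S2. W {#B, C#})" unfolding T6_def
      by (rule sum.reindex_cong[OF inj6]) (auto simp: case_prod_beta)
    also have "\<dots> = (\<Sum>(B, C)\<in>S1 \<times> S2. z1 ^ (a + 2) * z2 ^ (b - 1))"
      by (rule sum.cong) (auto simp: w6)
    finally show ?thesis using ca cb by (simp add: card_cartesian_product)
  qed
  have pairm: "mset_set {B, C} = {#B, C#}" if "B \<noteq> C" for B C :: "'a set"
    using that by simp
  have ch: "choices \<rho> = T0 \<union> T1 \<union> T2 \<union> T3 \<union> T4 \<union> T5 \<union> T6"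
  proof
    show "T0 \<union> T1 \<union> T2 \<union> T3 \<union> T4 \<union> T5 \<union> T6 \<subseteq> choices \<rho>"
    proof -
      have "T0 \<subseteq> choices \<rho>" unfolding T0_def choices_def by auto
      moreover have "T1 \<subseteq> choices \<rho>" unfolding T1_def choices_def using in1 by auto
      moreover have "T2 \<subseteq> choices \<rho>" unfolding T2_def choices_def using in2 by auto
      moreover have "T3 \<subseteq> choices \<rho>" unfolding T3_def choices_def using in2 by (auto intro: dbl_sub)
      moreover have "T4 \<subseteq> choices \<rho>"
      proof
        fix X assume "X \<in> T4"
        then obtain B C where "X = mset_set {B, C}" "B \<noteq> C" "B \<in> S1" "C \<in> S1"
          unfolding T4_def using P1e by blast
        then have "X = {#B, C#}" "{#B, C#} \<subseteq># \<rho>"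
          by (auto intro!: pair_sub dest: in1)
        then show "X \<in> choices \<rho>" unfolding choices_def by auto
      qed
      moreover have "T5 \<subseteq> choices \<rho>"
      proof
        fix X assume "X \<in> T5"
        then obtain B C where "X = mset_set {B, C}" "B \<noteq> C" "B \<in> S2" "C \<in> S2"
          unfolding T5_def using P2e by blast
        then have "X = {#B, C#}" "{#B, C#} \<subseteq># \<rho>"
          by (auto intro!: pair_sub dest: in2)
        then show "X \<in> choices \<rho>" unfolding choices_def by auto
      qed
      moreover have "T6 \<subseteq> choices \<rho>"
      proof
        fix X assume "X \<in> T6"
        then obtain B C where "X = {#B, C#}" "B \<in> S1" "C \<in> S2" unfolding T6_def by auto
        moreover then have "B \<noteq> C" using S12 by blast
        ultimately have "X = {#B, C#}" "{#B, C#} \<subseteq># \<rho>"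
          by (auto intro!: pair_sub dest: in1 in2)
        then show "X \<in> choices \<rho>" unfolding choices_def by auto
      qed
      ultimately show ?thesis by blast
    qed
  next
    show "choices \<rho> \<subseteq> T0 \<union> T1 \<union> T2 \<union> T3 \<union> T4 \<union> T5 \<union> T6"
    proof
      fix X assume "X \<in> choices \<rho>"
      then have sub: "X \<subseteq># \<rho>" and sz: "size X \<le> 2" unfolding choices_def by auto
      have inr: "S \<in> S1 \<union> S2" if "S \<in># X" for S using that sub setr by (metis mset_subset_eqD)
      consider "size X = 0" | "size X = 1" | "size X = 2" using sz by linarith
      then show "X \<in> T0 \<union> T1 \<union> T2 \<union> T3 \<union> T4 \<union> T5 \<union> T6"
      proof cases
        case 1 then show ?thesis unfolding T0_def by simp
      next
        case 2
        then obtain B where X: "X = {#B#}" using size_1_singleton_mset by blast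
        then have "B \<in> S1 \<union> S2" using inr by simp
        then show ?thesis unfolding T1_def T2_def X by blast
      next
        case 3
        then obtain B N where N: "X = add_mset B N" using size_eq_Suc_imp_eq_union[of X 1] by auto
        then have "size N = 1" using 3 by simp
        then obtain C where "N = {#C#}" using size_1_singleton_mset by blast
        then have X: "X = {#B, C#}" using N by simp
        have B: "B \<in> S1 \<union> S2" and C: "C \<in> S1 \<union> S2" using inr X by auto
        show ?thesis
        proof (cases "B = C")
          case True
          then have "count \<rho> B \<ge> 2" using mset_subset_eq_count[OF sub, of B] X by simp
          then have "B \<in> S2" using B unfolding S1_def by auto
          then show ?thesis unfolding T3_def X True by blast
        next
          case False
          have c2: "{B, C} \<in> P1" if "B \<in> S1" "C \<in> S1" using that False unfolding P1_def by auto
          have c3: "{B, C} \<in> P2" if "B \<in> S2" "C \<in> S2" using that False unfolding P2_def by auto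
          have c4: "{#B, C#} = {#C, B#}" by (simp add: add_mset_commute)
          from B C consider "B \<in> S1" "C \<in> S1" | "B \<in> S2" "C \<in> S2" | "B \<in> S1" "C \<in> S2"
            | "B \<in> S2" "C \<in> S1" by blast
          then show ?thesis
          proof cases
            case 1 then have "X \<in> T4" unfolding T4_def X using c2 pairm[OF False] by (metis image_eqI)
            then show ?thesis by blast
          next
            case 2 then have "X \<in> T5" unfolding T5_def X using c3 pairm[OF False] by (metis image_eqI)
            then show ?thesis by blast
          next
            case 3 then have "X \<in> T6" unfolding T6_def X by (auto intro!: image_eqI[where x = "(B, C)"])
            then show ?thesis by blast
          next
            case 4 then have "X \<in> T6" unfolding T6_def X c4 by (auto intro!: image_eqI[where x = "(C, B)"])
            then show ?thesis by blast
          qed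
        qed
      qed
    qed
  qed
  define tpf where "tpf X = (if size X = 0 then 0 else if size X = 1 then (if set_mset X \<subseteq> S1 then 1 else 2)
      else if (\<exists>B. count X B = 2) then 3 else if set_mset X \<subseteq> S1 then 4
      else if set_mset X \<subseteq> S2 then 5 else (6::nat))" for X :: "'a set multiset"
  have ty0: "tpf X = 0" if "X \<in> T0" for X using that unfolding T0_def tpf_def by simp
  have ty1: "tpf X = 1" if "X \<in> T1" for X using that unfolding T1_def tpf_def by auto
  have ty2: "tpf X = 2" if "X \<in> T2" for X using that S12 unfolding T2_def tpf_def by auto
  have ty3: "tpf X = 3" if "X \<in> T3" for X using that unfolding T3_def tpf_def by auto
  have ty4: "tpf X = 4" if hX: "X \<in> T4" for X
  proof -
    obtain U where U: "U \<in> P1" "X = mset_set U" using hX unfolding T4_def by (rule imageE) blast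
    obtain B C where X0: "U = {B, C}" "B \<noteq> C" "B \<in> S1" "C \<in> S1" using P1e[OF U(1)] by blast
    have X: "X = {#B, C#}" "B \<noteq> C" "B \<in> S1" "C \<in> S1" using X0 U(2) pairm by auto
    have "\<not> (\<exists>D. count X D = 2)" using X(1,2) by auto
    then show ?thesis using X unfolding tpf_def by auto
  qed
  have ty5: "tpf X = 5" if hX: "X \<in> T5" for X
  proof -
    obtain U where U: "U \<in> P2" "X = mset_set U" using hX unfolding T5_def by (rule imageE) blast
    obtain B C where X0: "U = {B, C}" "B \<noteq> C" "B \<in> S2" "C \<in> S2" using P2e[OF U(1)] by blast
    have X: "X = {#B, C#}" "B \<noteq> C" "B \<in> S2" "C \<in> S2" using X0 U(2) pairm by auto
    have "\<not> (\<exists>D. count X D = 2)" using X(1,2) by auto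
    moreover have "B \<notin> S1" using X S12 by blast
    ultimately show ?thesis using X unfolding tpf_def by auto
  qed
  have ty6: "tpf X = 6" if hX: "X \<in> T6" for X
  proof -
    obtain B C where X: "X = {#B, C#}" "B \<in> S1" "C \<in> S2" using hX unfolding T6_def by auto
    have "B \<noteq> C" "B \<notin> S2" "C \<notin> S1" using X S12 by blast+
    moreover have "\<not> (\<exists>D. count X D = 2)" using X(1) \<open>B \<noteq> C\<close> by auto
    ultimately show ?thesis using X unfolding tpf_def by auto
  qed
  have finT: "finite T0" "finite T1" "finite T2" "finite T3" "finite T4" "finite T5" "finite T6"
    unfolding T0_def T1_def T2_def T3_def T4_def T5_def T6_def P1_def P2_def using fin1 fin2 by auto
  have finc: "finite (choices \<rho>)" unfolding ch using finT by simp
  have g0: "{X \<in> choices \<rho>. tpf X = 0} = T0" unfolding ch using ty0 ty1 ty2 ty3 ty4 ty5 ty6 by fastforce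
  have g1: "{X \<in> choices \<rho>. tpf X = 1} = T1" unfolding ch using ty0 ty1 ty2 ty3 ty4 ty5 ty6 by fastforce
  have g2: "{X \<in> choices \<rho>. tpf X = 2} = T2" unfolding ch using ty0 ty1 ty2 ty3 ty4 ty5 ty6 by fastforce
  have g3: "{X \<in> choices \<rho>. tpf X = 3} = T3" unfolding ch using ty0 ty1 ty2 ty3 ty4 ty5 ty6 by fastforce
  have g4: "{X \<in> choices \<rho>. tpf X = 4} = T4" unfolding ch using ty0 ty1 ty2 ty3 ty4 ty5 ty6 by fastforce
  have g5: "{X \<in> choices \<rho>. tpf X = 5} = T5" unfolding ch using ty0 ty1 ty2 ty3 ty4 ty5 ty6 by fastforce
  have g6: "{X \<in> choices \<rho>. tpf X = 6} = T6" unfolding ch using ty0 ty1 ty2 ty3 ty4 ty5 ty6 by fastforce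
  have "sum W (choices \<rho>) = (\<Sum>k\<in>{0,1,2,3,4,5,6}. sum W {X \<in> choices \<rho>. tpf X = k})"
    by (rule sum.group[symmetric]) (use finc in \<open>auto simp: tpf_def\<close>)
  also have "\<dots> = sum W {X \<in> choices \<rho>. tpf X = 0} + (sum W {X \<in> choices \<rho>. tpf X = 1}
     + (sum W {X \<in> choices \<rho>. tpf X = 2} + (sum W {X \<in> choices \<rho>. tpf X = 3}
     + (sum W {X \<in> choices \<rho>. tpf X = 4} + (sum W {X \<in> choices \<rho>. tpf X = 5}
     + sum W {X \<in> choices \<rho>. tpf X = 6})))))"
    by simp
  also have "\<dots> = sum W T0 + (sum W T1 + (sum W T2 + (sum W T3 + (sum W T4 + (sum W T5 + sum W T6)))))"
    by (simp only: g0 g1 g2 g3 g4 g5 g6)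
  finally have fin: "sum W (choices \<rho>) = sum W T0 + (sum W T1 + (sum W T2 + (sum W T3 + (sum W T4 + (sum W T5 + sum W T6)))))" .
  have eq: "(\<Sum>X\<in>choices \<rho>. z1 ^ mult_count 1 (opx x \<rho> X) * z2 ^ mult_count 2 (opx x \<rho> X)) = sum W (choices \<rho>)"
    by (simp add: W_def)
  show ?thesis unfolding eq fin sum0 sum1 sum2 sum3 sum4 sum5 sum6 by (simp only: add.assoc)
qed




lemma double_Suc: "double_mset (Suc m) = double_mset m + {#Suc m, Suc m#}"
  unfolding double_mset_def by (simp add: atLeastAtMostSuc_conv add.commute)

lemma count_double: "count (double_mset m) y = (if 1 \<le> y \<and> y \<le> m then 2 else 0)"
  by (induction m) (auto simp: double_Suc double_mset_def)

lemma parts_empty: "mset_set_partitions ({#} :: 'a multiset) = {{#}}"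
proof
  show "mset_set_partitions ({#} :: 'a multiset) \<subseteq> {{#}}"
  proof
    fix \<pi> :: "'a set multiset" assume p: "\<pi> \<in> mset_set_partitions {#}"
    then have b: "\<forall>S\<in>#\<pi>. S \<noteq> {} \<and> finite S" and s: "sb \<pi> = {#}"
      by (auto simp: mset_set_partitions_def)
    have "size \<pi> \<le> size (sb \<pi>)" by (rule size_le_blocks[OF b])
    then show "\<pi> \<in> {{#}}" using s by simp
  qed
qed (simp add: mset_set_partitions_def)

lemma deriv_eqs:
  fixes m :: nat
  defines "R \<equiv> mset_set_partitions (double_mset m)"
  shows d1: "\<And>z1 t. deriv (\<lambda>s. P2 m z1 s) t
      = (\<Sum>\<rho>\<in>R. z1 ^ mult_count 1 \<rho> * (real (mult_count 2 \<rho>) * t ^ (mult_count 2 \<rho> - 1)))"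
    and d4: "\<And>z2 u. deriv (\<lambda>v. P2 m v z2) u
      = (\<Sum>\<rho>\<in>R. z2 ^ mult_count 2 \<rho> * (real (mult_count 1 \<rho>) * u ^ (mult_count 1 \<rho> - 1)))"
proof -
  fix z1 t show "deriv (\<lambda>s. P2 m z1 s) t
      = (\<Sum>\<rho>\<in>R. z1 ^ mult_count 1 \<rho> * (real (mult_count 2 \<rho>) * t ^ (mult_count 2 \<rho> - 1)))"
    unfolding P2_def R_def by (rule deriv_sum_pow)
next
  fix z2 u show "deriv (\<lambda>v. P2 m v z2) u
      = (\<Sum>\<rho>\<in>R. z2 ^ mult_count 2 \<rho> * (real (mult_count 1 \<rho>) * u ^ (mult_count 1 \<rho> - 1)))"
    unfolding P2_def R_def by (rule deriv_sum_pow')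
qed

lemma D2op_P2:
  fixes m :: nat
  defines "R \<equiv> mset_set_partitions (double_mset m)"
  shows "D2op (P2 m) z1 z2 = (\<Sum>\<rho>\<in>R.
      z2 * (z1 ^ mult_count 1 \<rho> * (real (mult_count 2 \<rho>) * z2 ^ (mult_count 2 \<rho> - 1)))
    + 1 / 2 * z1 ^ 4 * ((z1 ^ mult_count 1 \<rho> * real (mult_count 2 \<rho>)) * (real (mult_count 2 \<rho> - 1) * z2 ^ (mult_count 2 \<rho> - 1 - 1)))
    + z1 ^ 3 * ((real (mult_count 2 \<rho>) * z2 ^ (mult_count 2 \<rho> - 1)) * (real (mult_count 1 \<rho>) * z1 ^ (mult_count 1 \<rho> - 1)))
    + 1 / 2 * z1 ^ 2 * ((z2 ^ mult_count 2 \<rho> * real (mult_count 1 \<rho>)) * (real (mult_count 1 \<rho> - 1) * z1 ^ (mult_count 1 \<rho> - 1 - 1)))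
    + z1 ^ 3 * (z1 ^ mult_count 1 \<rho> * (real (mult_count 2 \<rho>) * z2 ^ (mult_count 2 \<rho> - 1)))
    + z1 ^ 2 * (z2 ^ mult_count 2 \<rho> * (real (mult_count 1 \<rho>) * z1 ^ (mult_count 1 \<rho> - 1)))
    + z2 * (z1 ^ mult_count 1 \<rho> * z2 ^ mult_count 2 \<rho>))"
proof -
  have e2: "(\<lambda>t. deriv (\<lambda>s. P2 m z1 s) t) = (\<lambda>t. \<Sum>\<rho>\<in>R. (z1 ^ mult_count 1 \<rho> * real (mult_count 2 \<rho>)) * t ^ (mult_count 2 \<rho> - 1))"
    by (rule ext) (simp only: d1[of m, folded R_def] mult.assoc)
  have e3: "(\<lambda>u. deriv (\<lambda>t. P2 m u t) z2) = (\<lambda>u. \<Sum>\<rho>\<in>R. u ^ mult_count 1 \<rho> * (real (mult_count 2 \<rho>) * z2 ^ (mult_count 2 \<rho> - 1)))"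
    by (rule ext) (simp only: d1[of m, folded R_def])
  have e5: "(\<lambda>u. deriv (\<lambda>v. P2 m v z2) u) = (\<lambda>u. \<Sum>\<rho>\<in>R. (z2 ^ mult_count 2 \<rho> * real (mult_count 1 \<rho>)) * u ^ (mult_count 1 \<rho> - 1))"
    by (rule ext) (simp only: d4[of m, folded R_def] mult.assoc)
  have f: "P2 m z1 z2 = (\<Sum>\<rho>\<in>R. z1 ^ mult_count 1 \<rho> * z2 ^ mult_count 2 \<rho>)"
    unfolding P2_def R_def ..
  show ?thesis
    unfolding D2op_def e2 e3 e5 deriv_sum_pow deriv_sum_pow' d1[of m, folded R_def] d4[of m, folded R_def] f
    by (simp only: sum_distrib_left sum.distrib mult.assoc)
qed


theorem mainTheorem1:
  shows "P2 0 = (\<lambda>z1 z2. 1)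
    \<and> (\<forall>n\<ge>1. \<forall>z1 z2. P2 n z1 z2 = D2op (P2 (n - 1)) z1 z2)
    \<and> (\<forall>n. finite (mset_set_partitions (double_mset n))
           \<and> real (card (mset_set_partitions (double_mset n))) = P2 n 1 1)"
proof (intro conjI allI impI)
  show "P2 0 = (\<lambda>z1 z2. 1)"
    by (rule ext)+ (simp add: P2_def double_mset_def parts_empty mc_empty)
next
  fix n :: nat show "finite (mset_set_partitions (double_mset n))" by (rule finite_parts)
next
  fix n :: nat show "real (card (mset_set_partitions (double_mset n))) = P2 n 1 1"
    by (simp add: P2_def)
next
  fix n :: nat and z1 z2 :: real assume "n \<ge> 1"
  then obtain m where n: "n = Suc m" by (cases n) auto
  define M where "M = double_mset m"
  have x: "Suc m \<notin># M" unfolding M_def using count_double[of m "Suc m"] by (simp add: not_in_iff)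
  have c2: "\<forall>y. count M y \<le> 2" unfolding M_def by (simp add: count_double)
  have "P2 n z1 z2 = (\<Sum>\<pi>\<in>mset_set_partitions (M + {#Suc m, Suc m#}). z1 ^ mult_count 1 \<pi> * z2 ^ mult_count 2 \<pi>)"
    unfolding P2_def n M_def double_Suc ..
  also have "\<dots> = (\<Sum>\<rho>\<in>mset_set_partitions M. \<Sum>X\<in>choices \<rho>.
        z1 ^ mult_count 1 (opx (Suc m) \<rho> X) * z2 ^ mult_count 2 (opx (Suc m) \<rho> X))"
    by (rule sum_step[OF x])
  also have "\<dots> = (\<Sum>\<rho>\<in>mset_set_partitions M.
      z2 * (z1 ^ mult_count 1 \<rho> * (real (mult_count 2 \<rho>) * z2 ^ (mult_count 2 \<rho> - 1)))
    + 1 / 2 * z1 ^ 4 * ((z1 ^ mult_count 1 \<rho> * real (mult_count 2 \<rho>)) * (real (mult_count 2 \<rho> - 1) * z2 ^ (mult_count 2 \<rho> - 1 - 1)))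
    + z1 ^ 3 * ((real (mult_count 2 \<rho>) * z2 ^ (mult_count 2 \<rho> - 1)) * (real (mult_count 1 \<rho>) * z1 ^ (mult_count 1 \<rho> - 1)))
    + 1 / 2 * z1 ^ 2 * ((z2 ^ mult_count 2 \<rho> * real (mult_count 1 \<rho>)) * (real (mult_count 1 \<rho> - 1) * z1 ^ (mult_count 1 \<rho> - 1 - 1)))
    + z1 ^ 3 * (z1 ^ mult_count 1 \<rho> * (real (mult_count 2 \<rho>) * z2 ^ (mult_count 2 \<rho> - 1)))
    + z1 ^ 2 * (z2 ^ mult_count 2 \<rho> * (real (mult_count 1 \<rho>) * z1 ^ (mult_count 1 \<rho> - 1)))
    + z2 * (z1 ^ mult_count 1 \<rho> * z2 ^ mult_count 2 \<rho>))"
  proof (rule sum.cong[OF refl])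
    fix \<rho> assume r: "\<rho> \<in> mset_set_partitions M"
    show "(\<Sum>X\<in>choices \<rho>. z1 ^ mult_count 1 (opx (Suc m) \<rho> X) * z2 ^ mult_count 2 (opx (Suc m) \<rho> X)) =
      z2 * (z1 ^ mult_count 1 \<rho> * (real (mult_count 2 \<rho>) * z2 ^ (mult_count 2 \<rho> - 1)))
    + 1 / 2 * z1 ^ 4 * ((z1 ^ mult_count 1 \<rho> * real (mult_count 2 \<rho>)) * (real (mult_count 2 \<rho> - 1) * z2 ^ (mult_count 2 \<rho> - 1 - 1)))
    + z1 ^ 3 * ((real (mult_count 2 \<rho>) * z2 ^ (mult_count 2 \<rho> - 1)) * (real (mult_count 1 \<rho>) * z1 ^ (mult_count 1 \<rho> - 1)))
    + 1 / 2 * z1 ^ 2 * ((z2 ^ mult_count 2 \<rho> * real (mult_count 1 \<rho>)) * (real (mult_count 1 \<rho> - 1) * z1 ^ (mult_count 1 \<rho> - 1 - 1)))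
    + z1 ^ 3 * (z1 ^ mult_count 1 \<rho> * (real (mult_count 2 \<rho>) * z2 ^ (mult_count 2 \<rho> - 1)))
    + z1 ^ 2 * (z2 ^ mult_count 2 \<rho> * (real (mult_count 1 \<rho>) * z1 ^ (mult_count 1 \<rho> - 1)))
    + z2 * (z1 ^ mult_count 1 \<rho> * z2 ^ mult_count 2 \<rho>)"
      unfolding weight_sum[OF r x c2 refl refl] by (rule alg)
  qed
  also have "\<dots> = D2op (P2 m) z1 z2" unfolding D2op_P2 M_def ..
  finally show "P2 n z1 z2 = D2op (P2 (n - 1)) z1 z2" using n by simp
qed


end
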